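(* Let $G_i=(V_i,E_i)$ be a graph and $S_i\subseteq V_i$, $i\in\{1,2\}$, and let $k,k'$ be integers. If $S_1\times S_2$ is a $k$-daf set in $G_1\times G_2$ and $S_2$ is a defensive $k'$-alliance in $G_2$, then $S_1$ is a $(k-k')$-daf set in $G_1$.
   Context: All graphs are finite and simple. For a graph $G=(V,E)$, a set $S\subseteq V$ and $v\in V$, let $\delta_S(v)=|\{u\in S: uv\in E\}|$ and $\overline{S}=V\setminus S$. For an integer $k$, a non-empty set $S\subseteq V$ is a defensive $k$-alliance if $\delta_S(v)\ge \delta_{\overline S}(v)+k$ for every $v\in S$. A set $X\subseteq V$ is a defensive $k$-alliance free set ($k$-daf set) if no defensive $k$-alliance $S$ satisfies $S\subseteq X$. The Cartesian product $G_1\times G_2$ of $G_1=(V_1,E_1)$, $G_2=(V_2,E_2)$ has vertex set $V_1\times V_2$, with $(a,b)$ adjacent to $(c,d)$ iff either $a=c$ and $bd\in E_2$, or $b=d$ and $ac\in E_1$. *)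

theory Defs
  imports Main
begin

definition graph :: "'a set \<Rightarrow> ('a \<Rightarrow> 'a \<Rightarrow> bool) \<Rightarrow> bool" where
  "graph V E \<longleftrightarrow> finite V \<and> (\<forall>u v. E u v \<longrightarrow> u \<in> V \<and> v \<in> V)
     \<and> (\<forall>u v. E u v \<longrightarrow> E v u) \<and> (\<forall>v. \<not> E v v)"

definition delta :: "('a \<Rightarrow> 'a \<Rightarrow> bool) \<Rightarrow> 'a set \<Rightarrow> 'a \<Rightarrow> int" where
  "delta E S v = int (card {u \<in> S. E u v})"

definition defensive_alliance :: "'a set \<Rightarrow> ('a \<Rightarrow> 'a \<Rightarrow> bool) \<Rightarrow> int \<Rightarrow> 'a set \<Rightarrow> bool" where
  "defensive_alliance V E k S \<longleftrightarrow> S \<noteq> {} \<and> S \<subseteq> V \<and>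
     (\<forall>v\<in>S. delta E S v \<ge> delta E (V - S) v + k)"

definition daf_set :: "'a set \<Rightarrow> ('a \<Rightarrow> 'a \<Rightarrow> bool) \<Rightarrow> int \<Rightarrow> 'a set \<Rightarrow> bool" where
  "daf_set V E k X \<longleftrightarrow> X \<subseteq> V \<and> \<not> (\<exists>S. S \<subseteq> X \<and> defensive_alliance V E k S)"

definition cart_edge :: "('a \<Rightarrow> 'a \<Rightarrow> bool) \<Rightarrow> ('b \<Rightarrow> 'b \<Rightarrow> bool) \<Rightarrow> 'a \<times> 'b \<Rightarrow> 'a \<times> 'b \<Rightarrow> bool" where
  "cart_edge E1 E2 p q \<longleftrightarrow>
     (fst p = fst q \<and> E2 (snd p) (snd q)) \<or> (snd p = snd q \<and> E1 (fst p) (fst q))"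

end

theory Submission
  imports Defs
begin

lemma card_cart:
  assumes g1: "graph V1 E1" and g2: "graph V2 E2" and C: "C \<subseteq> V1 \<times> V2"
  shows "card {q\<in>C. cart_edge E1 E2 q (a,b)} =
     card {y. (a,y)\<in>C \<and> E2 y b} + card {x. (x,b)\<in>C \<and> E1 x a}"
proof -
  have f1: "finite V1" and f2: "finite V2" using g1 g2 by (auto simp: graph_def)
  have eq: "{q\<in>C. cart_edge E1 E2 q (a,b)} =
     (\<lambda>y. (a,y)) ` {y. (a,y)\<in>C \<and> E2 y b} \<union> (\<lambda>x. (x,b)) ` {x. (x,b)\<in>C \<and> E1 x a}"
    by (auto simp: cart_edge_def)
  have fa: "finite {y. (a,y)\<in>C \<and> E2 y b}"
    by (rule finite_subset[OF _ f2]) (use C in auto)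
  have fb: "finite {x. (x,b)\<in>C \<and> E1 x a}"
    by (rule finite_subset[OF _ f1]) (use C in auto)
  have irr: "\<not> E1 a a" using g1 by (auto simp: graph_def)
  have disj: "(\<lambda>y. (a,y)) ` {y. (a,y)\<in>C \<and> E2 y b} \<inter> (\<lambda>x. (x,b)) ` {x. (x,b)\<in>C \<and> E1 x a} = {}"
    using irr by auto
  have "card {q\<in>C. cart_edge E1 E2 q (a,b)} =
     card ((\<lambda>y. (a,y)) ` {y. (a,y)\<in>C \<and> E2 y b}) + card ((\<lambda>x. (x,b)) ` {x. (x,b)\<in>C \<and> E1 x a})"
    unfolding eq by (rule card_Un_disjoint) (use fa fb disj in auto)
  also have "\<dots> = card {y. (a,y)\<in>C \<and> E2 y b} + card {x. (x,b)\<in>C \<and> E1 x a}"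
    by (subst card_image, simp add: inj_on_def)+ simp
  finally show ?thesis .
qed

theorem theorem2:
  fixes V1 :: "'a set" and E1 :: "'a \<Rightarrow> 'a \<Rightarrow> bool"
    and V2 :: "'b set" and E2 :: "'b \<Rightarrow> 'b \<Rightarrow> bool"
    and S1 :: "'a set" and S2 :: "'b set" and k k' :: int
  assumes "graph V1 E1" and "graph V2 E2"
    and "S1 \<subseteq> V1" and "S2 \<subseteq> V2"
    and "daf_set (V1 \<times> V2) (cart_edge E1 E2) k (S1 \<times> S2)"
    and "defensive_alliance V2 E2 k' S2"
  shows "daf_set V1 E1 (k - k') S1"
proof (rule ccontr)
  assume "\<not> ?thesis"
  then obtain S where SS: "S \<subseteq> S1" and da: "defensive_alliance V1 E1 (k - k') S"
    using assms(3) by (auto simp: daf_set_def)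
  have "defensive_alliance (V1 \<times> V2) (cart_edge E1 E2) k (S \<times> S2)"
    unfolding defensive_alliance_def
  proof (intro conjI ballI)
    show "S \<times> S2 \<noteq> {}" using da assms(6) by (auto simp: defensive_alliance_def)
    show "S \<times> S2 \<subseteq> V1 \<times> V2" using SS assms(3,4) by auto
  next
    fix p assume p: "p \<in> S \<times> S2"
    obtain a b where ab: "p = (a,b)" "a \<in> S" "b \<in> S2" using p by auto
    have h1: "delta E1 S a \<ge> delta E1 (V1 - S) a + (k - k')" using da ab by (auto simp: defensive_alliance_def)
    have h2: "delta E2 S2 b \<ge> delta E2 (V2 - S2) b + k'" using assms(6) ab by (auto simp: defensive_alliance_def)
    have c1: "card {q\<in>S \<times> S2. cart_edge E1 E2 q (a,b)} = card {y\<in>S2. E2 y b} + card {x\<in>S. E1 x a}"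
      using card_cart[OF assms(1,2), of "S \<times> S2" a b] SS assms(3,4) ab by auto
    have "{y. (a,y)\<in>V1 \<times> V2 - S \<times> S2 \<and> E2 y b} = {y\<in>V2 - S2. E2 y b}"
      using ab SS assms(3) by auto
    moreover have "{x. (x,b)\<in>V1 \<times> V2 - S \<times> S2 \<and> E1 x a} = {x\<in>V1 - S. E1 x a}"
      using ab assms(4) by auto
    ultimately have c2: "card {q\<in>V1 \<times> V2 - S \<times> S2. cart_edge E1 E2 q (a,b)} = card {y\<in>V2 - S2. E2 y b} + card {x\<in>V1 - S. E1 x a}"
      using card_cart[OF assms(1,2), of "V1 \<times> V2 - S \<times> S2" a b] by auto
    show "delta (cart_edge E1 E2) (S \<times> S2) p \<ge> delta (cart_edge E1 E2) (V1 \<times> V2 - S \<times> S2) p + k"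
      using h1 h2 c1 c2 ab by (simp add: delta_def)
  qed
  moreover have "S \<times> S2 \<subseteq> S1 \<times> S2" using SS by auto
  ultimately show False using assms(5) unfolding daf_set_def by blast
qed

end
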